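(* Let $f(z)=z\big(1+\sum_{n\ge1}c_nz^n\big)$ with $c_1,c_2,\dots$ regarded as independent variables, and let $f^{-1}(z)$ be its reverse series ($f\circ f^{-1}(z)=z$). For each integer $q$ write $(f^{-1}(z))^q=z^q\big(1+\sum_{n\ge1}\delta_n^qz^n\big)$ with $\delta_n^q$ polynomials in the $c_j$, and let a differential operator $L$ in the $c_j$ act on such series coefficientwise: $L[(f^{-1}(z))^q]=z^q\sum_{n\ge1}L[\delta_n^q]z^n$. Define the operators $$L_k=\partial_k+\sum_{n\ge1}(n+1)c_n\partial_{n+k}\ (k\ge1),\qquad L_0=\sum_{n\ge1}nc_n\partial_n,\qquad L_{-p}=\sum_{n\ge1}A_n^p\partial_n\ (p\ge1),$$ with $\partial_n=\partial/\partial c_n$ and $A_n^p$ as in the context. Then: (1) $L_k[f^{-1}(z)]=-[f^{-1}(z)]^{k+1}$ for $k\ge1$; (2) $L_0[f^{-1}(z)]=-f^{-1}(z)+z(f^{-1})'(z)$ and $L_{-1}[f^{-1}(z)]=-1+(1+2c_1z)(f^{-1})'(z)$; (3) $L_{-p}[f^{-1}(z)]=-[f^{-1}(z)]^{1-p}-\Lambda_p(z)(f^{-1})'(z)$ for $p\ge2$; in particular $\Lambda_p(z)$ is the unique function of the form $-z^{1-p}+\sum_{j=0}^{p-1}\alpha_jz^{1-j}$ such that $[f^{-1}(z)]^{1-p}+\Lambda_p(z)(f^{-1})'(z)$ expands as $\sum_{n\ge2}a_nz^n$; (4) $L_k[(f^{-1}(z))^{-k}]=k$ for $k\ge1$; (5)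 $L_{-p}[(f^{-1}(z))^p]=-p-\Lambda_p(z)\,\frac{d}{dz}[f^{-1}(z)]^p$ for $p\ge1$.
   Context: For $p\ge0$, $\Lambda_p$ denotes the unique function of the form $\Lambda_p(u)=-u^{1-p}+\sum_{j=0}^{p-1}\alpha_ju^{1-j}$ (with $\alpha_j$ polynomials in the $c_j$) such that the Laurent expansion at $z=0$ of $z^{1-p}f'(z)+\Lambda_p(f(z))$ contains only powers $z^n$ with $n\ge2$; e.g. $\Lambda_0(u)=-u$, $\Lambda_1(u)=-1-2c_1u$. The coefficients $A_n^p$ are defined by $z^{1-p}f'(z)+\Lambda_p(f(z))=\sum_{n\ge1}A_n^pz^{n+1}$. With these definitions $L_kf(z)=z^{k+1}f'(z)$ for $k\ge1$, $L_0f(z)=zf'(z)-f(z)$, and $L_{-p}f(z)=z^{1-p}f'(z)+\Lambda_p(f(z))$ for $p\ge1$. *)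

theory Defs
  imports "HOL-Analysis.Analysis" "HOL-Computational_Algebra.Formal_Laurent_Series"
begin

text \<open>The variables c_1, c_2, ... are modelled by a point c :: nat => real
  (the value c 0 is never used).  Quantities that are polynomials in the c_j
  are modelled as functions (nat => real) => real.\<close>

type_synonym cvec = "nat \<Rightarrow> real"

definition fser :: "cvec \<Rightarrow> real fps" where
  "fser c = Abs_fps (\<lambda>n. if n = 0 then 0 else if n = 1 then 1 else c (n - 1))"

definition finv :: "cvec \<Rightarrow> real fps" where
  "finv c = fps_inv (fser c)"

definition Gser :: "cvec \<Rightarrow> real fps" where
  "Gser c = fps_shift 1 (finv c)"

text \<open>(f^{-1}(z))^q = z^q * Gq c q, i.e. Gq c q = 1 + sum_n delta_n^q z^n\<close>
definition Gq :: "cvec \<Rightarrow> int \<Rightarrow> real fps" where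
  "Gq c q = (if 0 \<le> q then Gser c ^ nat q else inverse (Gser c ^ nat (- q)))"

definition pd :: "nat \<Rightarrow> (cvec \<Rightarrow> real) \<Rightarrow> cvec \<Rightarrow> real" where
  "pd n F c = deriv (\<lambda>t. F (c(n := t))) (c n)"

definition LamE :: "(nat \<Rightarrow> real) \<Rightarrow> nat \<Rightarrow> real fls \<Rightarrow> real fls" where
  "LamE \<alpha> p U = - (U powi (1 - int p)) + (\<Sum>j<p. fls_const (\<alpha> j) * U powi (1 - int j))"

definition fL :: "cvec \<Rightarrow> real fls" where
  "fL c = fps_to_fls (fser c)"

definition Lexpr :: "cvec \<Rightarrow> (nat \<Rightarrow> real) \<Rightarrow> nat \<Rightarrow> real fls" where
  "Lexpr c \<alpha> p = fls_X powi (1 - int p) * fls_deriv (fL c) + LamE \<alpha> p (fL c)"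

definition alpha :: "cvec \<Rightarrow> nat \<Rightarrow> nat \<Rightarrow> real" where
  "alpha c p = (THE \<alpha>. (\<forall>j\<ge>p. \<alpha> j = 0) \<and> (\<forall>n<2. fls_nth (Lexpr c \<alpha> p) n = 0))"

definition Lam :: "cvec \<Rightarrow> nat \<Rightarrow> real fls \<Rightarrow> real fls" where
  "Lam c p U = LamE (alpha c p) p U"

definition Acoef :: "nat \<Rightarrow> nat \<Rightarrow> cvec \<Rightarrow> real" where
  "Acoef p n c = fls_nth (fls_X powi (1 - int p) * fls_deriv (fL c) + Lam c p (fL c)) (int n + 1)"

definition Lpos :: "nat \<Rightarrow> (cvec \<Rightarrow> real) \<Rightarrow> cvec \<Rightarrow> real" where
  "Lpos k F c = pd k F c + (\<Sum>n. real (Suc n + 1) * c (Suc n) * pd (Suc n + k) F c)"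

definition Lzero :: "(cvec \<Rightarrow> real) \<Rightarrow> cvec \<Rightarrow> real" where
  "Lzero F c = (\<Sum>n. real (Suc n) * c (Suc n) * pd (Suc n) F c)"

definition Lneg :: "nat \<Rightarrow> (cvec \<Rightarrow> real) \<Rightarrow> cvec \<Rightarrow> real" where
  "Lneg p F c = (\<Sum>n. Acoef p (Suc n) c * pd (Suc n) F c)"

definition Lact :: "((cvec \<Rightarrow> real) \<Rightarrow> cvec \<Rightarrow> real) \<Rightarrow> int \<Rightarrow> cvec \<Rightarrow> real fls" where
  "Lact L q c = fls_X powi q * fps_to_fls (Abs_fps (\<lambda>n. L (\<lambda>c'. Gq c' q $ n) c))"

definition FinvL :: "cvec \<Rightarrow> real fls" where
  "FinvL c = fps_to_fls (finv c)"

end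

theory Submission
  imports Defs
begin

no_notation vec_nth (infixl \<open>$\<close> 90)
notation fls_nth (infixl \<open>$$\<close> 75)


definition hasd :: "(real \<Rightarrow> real fps) \<Rightarrow> real fps \<Rightarrow> real \<Rightarrow> bool" where
  "hasd F D t \<longleftrightarrow> (\<forall>m. ((\<lambda>s. F s $ m) has_real_derivative (D $ m)) (at t))"

lemma hasd_const: "hasd (\<lambda>_. A) 0 t"
  by (simp add: hasd_def)

lemma hasd_add: "hasd F DF t \<Longrightarrow> hasd G DG t \<Longrightarrow> hasd (\<lambda>s. F s + G s) (DF + DG) t"
  unfolding hasd_def by (auto intro!: derivative_eq_intros)

lemma hasd_diff: "hasd F DF t \<Longrightarrow> hasd G DG t \<Longrightarrow> hasd (\<lambda>s. F s - G s) (DF - DG) t"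
  unfolding hasd_def by (auto intro!: derivative_eq_intros)

lemma hasd_unique: "hasd F D1 t \<Longrightarrow> hasd F D2 t \<Longrightarrow> D1 = D2"
  unfolding hasd_def by (auto intro!: fps_ext intro: DERIV_unique)

lemma hasd_mult:
  assumes "hasd F DF t" "hasd G DG t"
  shows "hasd (\<lambda>s. F s * G s) (F t * DG + DF * G t) t"
  unfolding hasd_def
proof
  fix m
  have "((\<lambda>s. \<Sum>i=0..m. F s $ i * G s $ (m - i)) has_real_derivative
     (\<Sum>i=0..m. F t $ i * DG $ (m - i) + DF $ i * G t $ (m - i))) (at t)"
    using assms unfolding hasd_def by (intro DERIV_sum DERIV_mult') auto
  then show "((\<lambda>s. (F s * G s) $ m) has_real_derivative (F t * DG + DF * G t) $ m) (at t)"
    by (simp add: fps_mult_nth sum.distrib)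
qed

lemma hasd_power:
  assumes "hasd F DF t"
  shows "hasd (\<lambda>s. F s ^ k) (of_nat k * F t ^ (k - 1) * DF) t"
proof (induction k)
  case 0
  then show ?case using hasd_const[of 1 t] by simp
next
  case (Suc k)
  have "hasd (\<lambda>s. F s * F s ^ k) (F t * (of_nat k * F t ^ (k - 1) * DF) + DF * F t ^ k) t"
    by (rule hasd_mult[OF assms Suc])
  moreover have "F t * (of_nat k * F t ^ (k - 1) * DF) + DF * F t ^ k = of_nat (Suc k) * F t ^ (Suc k - 1) * DF"
    by (cases k) (simp_all add: algebra_simps)
  ultimately show ?case by simp
qed

lemma hasd_shift: "hasd F D t \<Longrightarrow> hasd (\<lambda>s. fps_shift 1 (F s)) (fps_shift 1 D) t"
  unfolding hasd_def by simp

lemma hasd_cong: "hasd F D t \<Longrightarrow> (\<And>s. F s = G s) \<Longrightarrow> hasd G D t"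
  unfolding hasd_def by simp

lemma fps_sX: "(B::'a::comm_ring_1 fps) $ 0 = 0 \<Longrightarrow> B = fps_X * fps_shift 1 B"
  by (rule fps_ext) (simp add: fps_X_mult_nth)

lemma fps_powX: "(B::'a::comm_ring_1 fps) $ 0 = 0 \<Longrightarrow> B ^ k = fps_X ^ k * (fps_shift 1 B) ^ k"
  by (subst fps_sX[of B], assumption) (simp add: power_mult_distrib)

lemma pow_mult_zero:
  assumes "(B::'a::comm_ring_1 fps) $ 0 = 0" "m < k"
  shows "(B ^ k * H) $ m = 0"
  using assms by (simp add: fps_powX[OF assms(1)] mult.assoc fps_X_power_mult_nth)

lemma pow_mult_zero':
  assumes "(B::'a::comm_ring_1 fps) $ 0 = 0" "H $ 0 = 0"
  shows "(B ^ m * H) $ m = 0"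
proof -
  have "(B ^ m * H) $ m = ((fps_shift 1 B) ^ m * H) $ 0"
    by (simp add: fps_powX[OF assms(1)] mult.assoc fps_X_power_mult_nth)
  then show ?thesis using assms by simp
qed

lemma pow_zero:
  assumes "(B::'a::comm_ring_1 fps) $ 0 = 0" "m < k"
  shows "(B ^ k) $ m = 0"
  using pow_mult_zero[OF assms, of 1] by simp

lemma mult_coeff_cong:
  assumes "\<And>i. i \<le> m \<Longrightarrow> P $ i = Q $ i"
  shows "(P * H) $ m = (Q * H) $ m"
  unfolding fps_mult_nth using assms by (intro sum.cong) auto

lemma compose_trunc:
  assumes "(B::'a::field fps) $ 0 = 0" "i \<le> N"
  shows "(A oo B) $ i = (\<Sum>j=0..N. fps_const (A $ j) * B ^ j) $ i"
proof -
  have "(\<Sum>j=0..N. fps_const (A $ j) * B ^ j) $ i = (\<Sum>j=0..N. A $ j * (B ^ j) $ i)"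
    by (simp add: fps_sum_nth)
  also have "\<dots> = (\<Sum>j=0..i. A $ j * (B ^ j) $ i)"
    using assms by (intro sum.mono_neutral_right) (auto simp: pow_zero)
  finally show ?thesis by (simp add: fps_compose_nth)
qed

lemma compose_deriv_sum:
  fixes A B H :: "'a::field fps"
  assumes B0: "B $ 0 = 0" and H0: "H $ 0 = 0"
  shows "(\<Sum>j=0..m. A $ j * (of_nat j * B ^ (j - 1) * H) $ m) = ((fps_deriv A oo B) * H) $ m"
proof -
  have "((fps_deriv A oo B) * H) $ m = ((\<Sum>j=0..m. fps_const (fps_deriv A $ j) * B ^ j) * H) $ m"
    using B0 by (intro mult_coeff_cong compose_trunc) auto
  also have "\<dots> = (\<Sum>j=0..m. (of_nat (Suc j) * A $ Suc j) * (B ^ j * H) $ m)"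
    by (simp add: sum_distrib_right fps_sum_nth mult.assoc)
  also have "\<dots> = (\<Sum>j=0..<m. (of_nat (Suc j) * A $ Suc j) * (B ^ j * H) $ m)"
    using B0 H0 by (simp add: pow_mult_zero' atLeastLessThanSuc_atLeastAtMost[symmetric])
  also have "\<dots> = (\<Sum>j=Suc 0..<Suc m. (of_nat j * A $ j) * (B ^ (j - 1) * H) $ m)"
    by (subst sum.shift_bounds_Suc_ivl) simp
  also have "\<dots> = (\<Sum>j=0..<Suc m. (of_nat j * A $ j) * (B ^ (j - 1) * H) $ m)"
    by (subst (2) sum.atLeast_Suc_lessThan) auto
  also have "\<dots> = (\<Sum>j=0..m. A $ j * (of_nat j * B ^ (j - 1) * H) $ m)"
    by (simp add: atLeastLessThanSuc_atLeastAtMost mult.assoc fps_mult_left_const_nth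
        mult.left_commute flip: fps_of_nat)
  finally show ?thesis by simp
qed

lemma hasd_zero0:
  assumes "hasd B DB t" "\<And>s. B s $ 0 = 0"
  shows "DB $ 0 = 0"
proof -
  have "((\<lambda>s. B s $ 0) has_real_derivative DB $ 0) (at t)" using assms(1) by (simp add: hasd_def)
  moreover have "((\<lambda>s. B s $ 0) has_real_derivative 0) (at t)" using assms(2) by simp
  ultimately show ?thesis using DERIV_unique by blast
qed

lemma hasd_compose:
  assumes A: "hasd A DA t" and B: "hasd B DB t" and B0: "\<And>s. B s $ 0 = 0"
  shows "hasd (\<lambda>s. A s oo B s) ((DA oo B t) + (fps_deriv (A t) oo B t) * DB) t"
  unfolding hasd_def
proof
  fix m
  have DB0: "DB $ 0 = 0" by (rule hasd_zero0[OF B B0])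
  have P: "\<And>j. hasd (\<lambda>s. B s ^ j) (of_nat j * B t ^ (j - 1) * DB) t"
    by (rule hasd_power[OF B])
  have "((\<lambda>s. \<Sum>j=0..m. A s $ j * (B s ^ j) $ m) has_real_derivative
     (\<Sum>j=0..m. A t $ j * (of_nat j * B t ^ (j - 1) * DB) $ m + DA $ j * (B t ^ j) $ m)) (at t)"
    using A P unfolding hasd_def by (intro DERIV_sum DERIV_mult') auto
  moreover have "(\<Sum>j=0..m. A t $ j * (of_nat j * B t ^ (j - 1) * DB) $ m + DA $ j * (B t ^ j) $ m)
     = ((DA oo B t) + (fps_deriv (A t) oo B t) * DB) $ m"
    unfolding sum.distrib compose_deriv_sum[OF B0 DB0] by (simp add: fps_compose_nth)
  ultimately show "((\<lambda>s. (A s oo B s) $ m) has_real_derivative ((DA oo B t) + (fps_deriv (A t) oo B t) * DB) $ m) (at t)"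
    by (simp add: fps_compose_nth)
qed

lemma natfun_Suc: "natfun_inverse f (Suc n) = - inverse (f $ 0) * (\<Sum>i=1..Suc n. f $ i * natfun_inverse f (Suc n - i))"
  by simp

lemma hasd_inverse_ex:
  assumes F: "hasd F DF t" and F0: "\<And>s. F s $ 0 = 1"
  shows "\<exists>D. ((\<lambda>s. inverse (F s) $ m) has_real_derivative D) (at t)"
proof (induction m rule: less_induct)
  case (less m)
  show ?case
  proof (cases m)
    case 0
    then show ?thesis using F0 by (auto simp: fps_inverse_def intro!: exI[where x=0])
  next
    case (Suc n)
    from less have "\<forall>i<m. \<exists>D. ((\<lambda>s. inverse (F s) $ i) has_real_derivative D) (at t)" by blast
    then obtain D where D: "\<And>i. i < m \<Longrightarrow> ((\<lambda>s. inverse (F s) $ i) has_real_derivative D i) (at t)"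
      by metis
    have "((\<lambda>s. - 1 * (\<Sum>i=1..Suc n. F s $ i * inverse (F s) $ (Suc n - i))) has_real_derivative
       (- 1 * (\<Sum>i=1..Suc n. F t $ i * D (Suc n - i) + DF $ i * inverse (F t) $ (Suc n - i)))) (at t)"
      using F D Suc unfolding hasd_def by (intro DERIV_cmult DERIV_sum DERIV_mult') auto
    moreover have "inverse (F s) $ m = - 1 * (\<Sum>i=1..Suc n. F s $ i * inverse (F s) $ (Suc n - i))" for s
      using F0[of s] Suc by (simp add: fps_inverse_def)
    ultimately show ?thesis by auto
  qed
qed

lemma hasd_inverse:
  assumes F: "hasd F DF t" and F0: "\<And>s. F s $ 0 = 1"
  shows "hasd (\<lambda>s. inverse (F s)) (- (inverse (F t) * inverse (F t)) * DF) t"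
proof -
  define DI where "DI = Abs_fps (\<lambda>m. SOME D. ((\<lambda>s. inverse (F s) $ m) has_real_derivative D) (at t))"
  have I: "hasd (\<lambda>s. inverse (F s)) DI t"
    unfolding hasd_def DI_def using hasd_inverse_ex[OF F F0] by (auto intro: someI_ex)
  have "hasd (\<lambda>s. F s * inverse (F s)) (F t * DI + DF * inverse (F t)) t"
    by (rule hasd_mult[OF F I])
  moreover have "F s * inverse (F s) = 1" for s using F0[of s] by (simp add: inverse_mult_eq_1')
  ultimately have "hasd (\<lambda>s. 1) (F t * DI + DF * inverse (F t)) t" by simp
  then have E: "F t * DI + DF * inverse (F t) = 0" using hasd_const hasd_unique by metis
  have "DI = inverse (F t) * (F t * DI)" using F0[of t]
    by (simp add: inverse_mult_eq_1 flip: mult.assoc)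
  also have "\<dots> = inverse (F t) * (- DF * inverse (F t))"
  proof -
    from E have "F t * DI = - (DF * inverse (F t))" by (simp add: eq_neg_iff_add_eq_0)
    then show ?thesis by simp
  qed
  finally have "DI = - (inverse (F t) * inverse (F t)) * DF" by (simp add: algebra_simps)
  with I show ?thesis by simp
qed

lemma fser_nth: "fser c $ m = (if m = 0 then 0 else if m = 1 then 1 else c (m - 1))"
  by (simp add: fser_def)

lemma fser0 [simp]: "fser c $ 0 = 0" and fser1 [simp]: "fser c $ 1 = 1"
  by (simp_all add: fser_nth)

lemma fser1' [simp]: "fser c $ Suc 0 = 1"
  by (simp add: fser_nth)

lemma hasd_fser:
  assumes "n \<ge> 1"
  shows "hasd (\<lambda>t. fser (c(n := t))) (fps_X ^ (n + 1)) t0"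
  unfolding hasd_def
proof
  fix m
  show "((\<lambda>t. fser (c(n := t)) $ m) has_real_derivative (fps_X ^ (n + 1)) $ m) (at t0)"
  proof (cases "m = n + 1")
    case True
    then have "(\<lambda>t. fser (c(n := t)) $ m) = (\<lambda>t. t)" using assms by (auto simp: fser_nth)
    then show ?thesis using True by simp
  next
    case False
    then have "m - 1 \<noteq> n \<or> m = 0" using assms by linarith
    then have "(\<lambda>t. fser (c(n := t)) $ m) = (\<lambda>t. fser c $ m)" using assms by (auto simp: fser_nth)
    moreover have "(fps_X ^ (n + 1) :: real fps) $ m = 0" using False by (simp only: fps_X_power_nth) simp
    ultimately show ?thesis by (simp only:) (rule DERIV_const)
  qed
qed

lemma finv0 [simp]: "finv c $ 0 = 0"
  by (simp add: finv_def fps_inv_def)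

lemma finv1 [simp]: "finv c $ 1 = 1"
  by (simp add: finv_def fps_inv_def)

lemma finv1' [simp]: "finv c $ Suc 0 = 1"
  using finv1[of c] by simp

lemma finv_nz [simp]: "finv c \<noteq> 0"
  using finv1[of c] by (metis fps_zero_nth zero_neq_one)

lemma hasd_finv_ex:
  assumes "n \<ge> 1"
  shows "\<exists>D. ((\<lambda>t. finv (c(n := t)) $ m) has_real_derivative D) (at t0)"
proof (induction m rule: less_induct)
  case (less m)
  show ?case
  proof (cases m)
    case 0
    then show ?thesis by (auto intro!: exI[where x=0])
  next
    case (Suc k)
    from less have "\<forall>i<m. \<exists>D. ((\<lambda>t. finv (c(n := t)) $ i) has_real_derivative D) (at t0)" by blast
    then obtain D where D: "\<And>i. i < m \<Longrightarrow> ((\<lambda>t. finv (c(n := t)) $ i) has_real_derivative D i) (at t0)"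
      by metis
    have P: "\<And>i. hasd (\<lambda>t. fser (c(n := t)) ^ i) (of_nat i * fser (c(n := t0)) ^ (i - 1) * fps_X ^ (n + 1)) t0"
      by (rule hasd_power[OF hasd_fser[OF assms]])
    have "((\<lambda>t. fps_X $ Suc k - (\<Sum>i=0..k. finv (c(n := t)) $ i * (fser (c(n := t)) ^ i) $ Suc k)) has_real_derivative
       (0 - (\<Sum>i=0..k. finv (c(n := t0)) $ i * (of_nat i * fser (c(n := t0)) ^ (i - 1) * fps_X ^ (n + 1)) $ Suc k + D i * (fser (c(n := t0)) ^ i) $ Suc k))) (at t0)"
      using P D Suc unfolding hasd_def by (intro DERIV_diff DERIV_const DERIV_sum DERIV_mult') auto
    moreover have "(\<lambda>t. finv (c(n := t)) $ m) = (\<lambda>t. fps_X $ Suc k - (\<Sum>i=0..k. finv (c(n := t)) $ i * (fser (c(n := t)) ^ i) $ Suc k))"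
      using Suc by (simp add: finv_def fps_inv_def fun_eq_iff del: fun_upd_apply)
    ultimately show ?thesis by metis
  qed
qed

lemma fderiv0: "fps_deriv (fser c) $ 0 = 1"
  by simp

lemma hasd_finv:
  assumes "n \<ge> 1"
  shows "hasd (\<lambda>t. finv (c(n := t))) (- (finv c ^ (n + 1)) * fps_deriv (finv c)) (c n)"
proof -
  define Dg where "Dg = Abs_fps (\<lambda>m. SOME D. ((\<lambda>t. finv (c(n := t)) $ m) has_real_derivative D) (at (c n)))"
  have I: "hasd (\<lambda>t. finv (c(n := t))) Dg (c n)"
    unfolding hasd_def Dg_def using hasd_finv_ex[OF assms] by (auto intro: someI_ex)
  have "hasd (\<lambda>t. fser (c(n := t)) oo finv (c(n := t)))
     ((fps_X ^ (n + 1) oo finv (c(n := c n))) + (fps_deriv (fser (c(n := c n))) oo finv (c(n := c n))) * Dg) (c n)"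
    by (rule hasd_compose[OF hasd_fser[OF assms] I]) simp
  moreover have "fser (c(n := t)) oo finv (c(n := t)) = fps_X" for t
    unfolding finv_def by (rule fps_inv_right) simp_all
  ultimately have "hasd (\<lambda>t. fps_X) ((fps_X ^ (n + 1) oo finv c) + (fps_deriv (fser c) oo finv c) * Dg) (c n)"
    by (simp only: fun_upd_triv)
  moreover have "fps_X ^ (n + 1) oo finv c = finv c ^ (n + 1)" by (rule fps_X_power_compose) simp
  ultimately have "hasd (\<lambda>t. fps_X) (finv c ^ (n + 1) + (fps_deriv (fser c) oo finv c) * Dg) (c n)"
    by simp
  then have E: "finv c ^ (n + 1) + (fps_deriv (fser c) oo finv c) * Dg = 0"
    using hasd_const hasd_unique by metis
  have gd: "fps_deriv (finv c) = inverse (fps_deriv (fser c) oo finv c)"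
    unfolding finv_def by (rule fps_inv_deriv) simp_all
  have nz: "(fps_deriv (fser c) oo finv c) $ 0 \<noteq> 0" by simp
  have "Dg = fps_deriv (finv c) * ((fps_deriv (fser c) oo finv c) * Dg)"
    using nz by (simp add: gd inverse_mult_eq_1 flip: mult.assoc)
  also have "\<dots> = fps_deriv (finv c) * (- (finv c ^ (n + 1)))"
  proof -
    from E have "(fps_deriv (fser c) oo finv c) * Dg = - (finv c ^ (n + 1))"
      by (simp add: eq_neg_iff_add_eq_0 add.commute)
    then show ?thesis by simp
  qed
  finally show ?thesis using I by (simp add: mult.commute)
qed

lemma Gser0 [simp]: "Gser c $ 0 = 1"
  by (simp add: Gser_def)

lemma finv_eq: "finv c = fps_X * Gser c"
  unfolding Gser_def by (rule fps_sX) simp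

lemma hasd_Gser:
  assumes "n \<ge> 1"
  shows "hasd (\<lambda>t. Gser (c(n := t))) (- (finv c ^ n) * Gser c * fps_deriv (finv c)) (c n)"
proof -
  have "hasd (\<lambda>t. Gser (c(n := t))) (fps_shift 1 (- (finv c ^ (n + 1)) * fps_deriv (finv c))) (c n)"
    unfolding Gser_def by (rule hasd_shift[OF hasd_finv[OF assms]])
  moreover have "- (finv c ^ (n + 1)) * fps_deriv (finv c) = (- (finv c ^ n) * Gser c * fps_deriv (finv c)) * fps_X"
  proof -
    have "finv c ^ (n + 1) = finv c ^ n * (fps_X * Gser c)" using finv_eq[of c, symmetric] by simp
    then show ?thesis by (simp add: algebra_simps)
  qed
  ultimately show ?thesis by (simp only: fps_shift_times_fps_X')
qed

lemma Gq_pos: "0 \<le> q \<Longrightarrow> Gq c q = Gser c ^ nat q"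
  by (simp add: Gq_def)

lemma Gq_neg: "q < 0 \<Longrightarrow> Gq c q = inverse (Gser c ^ nat (- q))"
  by (simp add: Gq_def)

lemma hasd_Gq:
  assumes "n \<ge> 1"
  shows "hasd (\<lambda>t. Gq (c(n := t)) q) (- fps_const (of_int q) * Gq c q * fps_deriv (finv c) * finv c ^ n) (c n)"
proof (cases "0 \<le> q")
  case True
  define k where "k = nat q"
  have "hasd (\<lambda>t. Gser (c(n := t)) ^ k) (of_nat k * Gser c ^ (k - 1) * (- (finv c ^ n) * Gser c * fps_deriv (finv c))) (c n)"
    using hasd_power[OF hasd_Gser[OF assms], where k=k] by simp
  moreover have "of_nat k * Gser c ^ (k - 1) * (- (finv c ^ n) * Gser c * fps_deriv (finv c))
      = - fps_const (of_int q) * Gq c q * fps_deriv (finv c) * finv c ^ n"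
  proof (cases k)
    case 0
    then show ?thesis using True k_def by (simp add: Gq_pos)
  next
    case (Suc j)
    then have "q = of_nat (Suc j)" using True k_def by simp
    have qk: "q = int k" using True k_def by simp
    have e: "fps_const (of_int q) = (of_nat k :: real fps)" unfolding qk fps_of_nat[symmetric] by simp
    have "Gq c q = Gser c ^ (k - 1) * Gser c" using Suc True k_def by (simp add: Gq_pos)
    then show ?thesis unfolding e by (simp add: mult_ac)
  qed
  ultimately show ?thesis using True k_def by (simp add: Gq_pos)
next
  case False
  define k where "k = nat (- q)"
  have k1: "k \<ge> 1" using False k_def by simp
  have F0: "\<And>s. (Gser (c(n := s)) ^ k) $ 0 = 1" by (simp add: fps_nth_power_0)
  have "hasd (\<lambda>t. inverse (Gser (c(n := t)) ^ k))
     (- (inverse (Gser c ^ k) * inverse (Gser c ^ k)) * (of_nat k * Gser c ^ (k - 1) * (- (finv c ^ n) * Gser c * fps_deriv (finv c)))) (c n)"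
    using hasd_inverse[OF hasd_power[OF hasd_Gser[OF assms], where k=k] F0] by simp
  moreover have "- (inverse (Gser c ^ k) * inverse (Gser c ^ k)) * (of_nat k * Gser c ^ (k - 1) * (- (finv c ^ n) * Gser c * fps_deriv (finv c)))
      = - fps_const (of_int q) * Gq c q * fps_deriv (finv c) * finv c ^ n"
  proof -
    have "Gser c ^ (k - 1) * Gser c = Gser c ^ k" using k1 by (cases k) auto
    moreover have "inverse (Gser c ^ k) * Gser c ^ k = 1" by (simp add: inverse_mult_eq_1)
    moreover have "- fps_const (of_int q) = (of_nat k :: real fps)"
    proof -
      have qk: "- q = int k" using False k_def by simp
      have "- fps_const (of_int q) = (fps_const (of_int (- q)) :: real fps)" by simp
      also have "\<dots> = of_nat k" unfolding qk fps_of_nat[symmetric] by simp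
      finally show ?thesis .
    qed
    ultimately show ?thesis using False k_def
      by (simp add: Gq_neg algebra_simps) (metis (no_types, lifting) mult.assoc mult.left_commute mult_1_right)
  qed
  ultimately show ?thesis using False k_def by (simp add: Gq_neg)
qed

definition Cq :: "cvec \<Rightarrow> int \<Rightarrow> real fps" where
  "Cq c q = - fps_const (of_int q) * Gq c q * fps_deriv (finv c)"

definition Wf :: "(nat \<Rightarrow> real) \<Rightarrow> real fps" where
  "Wf w = Abs_fps (\<lambda>j. if j = 0 then 0 else w j)"

lemma pd_Gq:
  assumes "n \<ge> 1"
  shows "pd n (\<lambda>c'. Gq c' q $ m) c = (Cq c q * finv c ^ n) $ m"
proof -
  have "((\<lambda>t. Gq (c(n := t)) q $ m) has_real_derivative (Cq c q * finv c ^ n) $ m) (at (c n))"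
    using hasd_Gq[OF assms, of c q] unfolding hasd_def Cq_def by blast
  then show ?thesis unfolding pd_def by (rule DERIV_imp_deriv)
qed

lemma opsum:
  "(\<Sum>j. w (Suc j) * pd (Suc j + s) (\<lambda>c'. Gq c' q $ m) c) = (Cq c q * finv c ^ s * (Wf w oo finv c)) $ m"
proof -
  define B where "B = Cq c q * finv c ^ s"
  define g where "g = finv c"
  have g0: "g $ 0 = 0" by (simp add: g_def)
  have T: "w (Suc j) * pd (Suc j + s) (\<lambda>c'. Gq c' q $ m) c = w (Suc j) * (g ^ Suc j * B) $ m" for j
    by (simp add: pd_Gq B_def g_def power_add mult_ac)
  have "(\<Sum>j. w (Suc j) * pd (Suc j + s) (\<lambda>c'. Gq c' q $ m) c) = (\<Sum>j<m. w (Suc j) * (g ^ Suc j * B) $ m)"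
    unfolding T by (rule suminf_finite) (auto simp: pow_mult_zero[OF g0] simp del: power_Suc)
  also have "\<dots> = (\<Sum>j=Suc 0..<Suc m. w j * (g ^ j * B) $ m)"
    by (subst sum.shift_bounds_Suc_ivl) (simp add: lessThan_atLeast0)
  also have "\<dots> = (\<Sum>j=0..<Suc m. Wf w $ j * (g ^ j * B) $ m)"
    by (subst (2) sum.atLeast_Suc_lessThan) (auto simp: Wf_def)
  also have "\<dots> = ((\<Sum>j=0..m. fps_const (Wf w $ j) * g ^ j) * B) $ m"
    by (simp add: atLeastLessThanSuc_atLeastAtMost sum_distrib_right fps_sum_nth mult.assoc)
  also have "\<dots> = ((Wf w oo g) * B) $ m"
    using g0 by (intro mult_coeff_cong) (simp add: compose_trunc)
  finally show ?thesis by (simp add: B_def g_def mult_ac)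
qed

lemma Lact_eq:
  assumes "\<And>m. L (\<lambda>c'. Gq c' q $ m) c = P $ m"
  shows "Lact L q c = fls_X powi q * fps_to_fls P"
proof -
  have "Abs_fps (\<lambda>m. L (\<lambda>c'. Gq c' q $ m) c) = P" by (rule fps_ext) (simp add: assms)
  then show ?thesis unfolding Lact_def by simp
qed

lemma FinvL_eq: "FinvL c = fls_X * fps_to_fls (Gser c)"
  unfolding FinvL_def by (subst finv_eq) (simp add: fls_times_fps_to_fls)

lemma FinvL_nz [simp]: "FinvL c \<noteq> 0"
  by (simp add: FinvL_def)

lemma XGq: "fls_X powi q * fps_to_fls (Gq c q) = FinvL c powi q"
proof (cases "0 \<le> q")
  case True
  then show ?thesis
    by (simp add: FinvL_eq power_int_mult_distrib Gq_pos power_int_nonneg_exp fps_to_fls_power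
        del: fls_X_power_int)
next
  case False
  have s0: "subdegree (Gser c ^ nat (- q)) = 0" by (simp add: subdegree_eq_0_iff fps_nth_power_0)
  have "fps_to_fls (Gser c) powi q = inverse (fps_to_fls (Gser c) ^ nat (- q))"
    using False by (simp add: power_int_def power_inverse)
  also have "\<dots> = fps_to_fls (Gq c q)"
    using False s0 by (simp add: Gq_neg fps_to_fls_power fls_inverse_fps_to_fls flip: fps_to_fls_power)
  finally show ?thesis by (simp add: FinvL_eq power_int_mult_distrib del: fls_X_power_int)
qed

lemma gdinv: "fps_deriv (finv c) * (fps_deriv (fser c) oo finv c) = 1"
proof -
  have gd: "fps_deriv (finv c) = inverse (fps_deriv (fser c) oo finv c)"
    unfolding finv_def by (rule fps_inv_deriv) simp_all
  show ?thesis unfolding gd by (rule inverse_mult_eq_1) simp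
qed

lemma Cq_gd: "Cq c q * (fps_deriv (fser c) oo finv c) = - fps_const (of_int q) * Gq c q"
  using gdinv[of c] unfolding Cq_def by (simp add: mult.assoc)

lemma Lpos_coef:
  assumes "k \<ge> 1"
  shows "Lpos k (\<lambda>c'. Gq c' q $ m) c = (Cq c q * finv c ^ k * (fps_deriv (fser c) oo finv c)) $ m"
proof -
  define w where "w = (\<lambda>j. real (j + 1) * c j)"
  have S: "(\<Sum>n. real (Suc n + 1) * c (Suc n) * pd (Suc n + k) (\<lambda>c'. Gq c' q $ m) c)
      = (Cq c q * finv c ^ k * (Wf w oo finv c)) $ m"
    using opsum[of w k q m c] unfolding w_def by simp
  have W: "Wf w = fps_deriv (fser c) - 1"
    by (rule fps_ext) (auto simp: Wf_def w_def fser_nth)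
  have "(Wf w oo finv c) = (fps_deriv (fser c) oo finv c) - 1"
    unfolding W by (simp add: fps_compose_sub_distrib)
  then have "1 + (Wf w oo finv c) = fps_deriv (fser c) oo finv c" by simp
  moreover have "(Cq c q * finv c ^ k) $ m + (Cq c q * finv c ^ k * (Wf w oo finv c)) $ m
      = (Cq c q * finv c ^ k * (1 + (Wf w oo finv c))) $ m"
    by (simp only: distrib_left mult_1_right fps_add_nth)
  ultimately have "(Cq c q * finv c ^ k) $ m + (Cq c q * finv c ^ k * (Wf w oo finv c)) $ m
      = (Cq c q * finv c ^ k * (fps_deriv (fser c) oo finv c)) $ m"
    by simp
  then show ?thesis unfolding Lpos_def S pd_Gq[OF assms] .
qed

lemma Lact_Lpos:
  assumes "k \<ge> 1"
  shows "Lact (Lpos k) q c = - fls_const (of_int q) * FinvL c powi q * FinvL c ^ k"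
proof -
  have "Lact (Lpos k) q c = fls_X powi q * fps_to_fls (Cq c q * finv c ^ k * (fps_deriv (fser c) oo finv c))"
    by (rule Lact_eq) (rule Lpos_coef[OF assms])
  also have "Cq c q * finv c ^ k * (fps_deriv (fser c) oo finv c) = - fps_const (of_int q) * Gq c q * finv c ^ k"
    using Cq_gd[of c q] by (simp add: mult_ac)
  finally have "Lact (Lpos k) q c = - fls_const (of_int q) * (fls_X powi q * fps_to_fls (Gq c q)) * FinvL c ^ k"
    by (simp add: fls_times_fps_to_fls fps_to_fls_power FinvL_def mult_ac del: fls_X_power_int)
  then show ?thesis by (simp only: XGq)
qed

lemma part1: "k \<ge> 1 \<Longrightarrow> Lact (Lpos k) 1 c = - (FinvL c ^ (k + 1))"
  by (simp add: Lact_Lpos)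

lemma part4: "k \<ge> 1 \<Longrightarrow> Lact (Lpos k) (- int k) c = of_nat k"
  by (simp add: Lact_Lpos power_int_minus fls_of_nat)

lemma part2a: "Lact Lzero 1 c = - FinvL c + fls_X * fls_deriv (FinvL c)"
proof -
  define w where "w = (\<lambda>j. real j * c j)"
  define g where "g = finv c"
  define f where "f = fser c"
  have g0: "g $ 0 = 0" by (simp add: g_def)
  have "Lact Lzero 1 c = fls_X powi 1 * fps_to_fls (Cq c 1 * g ^ 0 * (Wf w oo g))"
  proof (rule Lact_eq)
    fix m
    show "Lzero (\<lambda>c'. Gq c' 1 $ m) c = (Cq c 1 * g ^ 0 * (Wf w oo g)) $ m"
      using opsum[of w 0 1 m c] unfolding w_def g_def Lzero_def by simp
  qed
  then have L: "Lact Lzero 1 c = fps_to_fls (fps_X * (Cq c 1 * (Wf w oo g)))"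
    by (simp add: fls_times_fps_to_fls)
  have XW: "fps_X * Wf w = fps_X * fps_deriv f - f"
    by (rule fps_ext) (auto simp: Wf_def w_def f_def fser_nth fps_X_mult_nth algebra_simps)
  have "g * (Wf w oo g) = (fps_X * Wf w) oo g"
    using g0 by (simp add: fps_compose_mult_distrib)
  also have "\<dots> = g * (fps_deriv f oo g) - fps_X"
    unfolding XW using g0 by (simp add: fps_compose_mult_distrib fps_compose_sub_distrib f_def g_def fps_inv_right finv_def)
  finally have E: "g * (Wf w oo g) = g * (fps_deriv f oo g) - fps_X" .
  have gd: "fps_deriv g * (fps_deriv f oo g) = 1" unfolding f_def g_def by (rule gdinv)
  have C1: "Cq c 1 = - (Gser c * fps_deriv g)" by (simp add: Cq_def Gq_pos g_def)
  have gX: "fps_X * Gser c = g" by (simp add: g_def finv_eq)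
  have "fps_X * (Cq c 1 * (Wf w oo g)) = - fps_deriv g * ((fps_X * Gser c) * (Wf w oo g))"
    by (simp only: C1 mult_ac mult_minus_left mult_minus_right)
  also have "\<dots> = - fps_deriv g * (g * (Wf w oo g))" by (simp only: gX)
  also have "\<dots> = - g + fps_X * fps_deriv g"
    unfolding E using gd by (simp add: algebra_simps)
  finally show ?thesis unfolding L by (simp add: FinvL_def g_def fls_deriv_fps_to_fls fls_times_fps_to_fls)
qed

definition low2 :: "real fls \<Rightarrow> bool" where
  "low2 D \<longleftrightarrow> (\<forall>n<2. D $$ n = 0)"

lemma low2_X2: "low2 (fls_X ^ 2 * fps_to_fls E)"
  unfolding low2_def by (simp add: fls_X_power_times_conv_shift)

lemma low2_rep:
  assumes "low2 R"
  shows "R = fls_X ^ 2 * fps_to_fls (fls_regpart (fls_shift 2 R))"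
proof (rule fls_eqI)
  fix n
  show "R $$ n = (fls_X ^ 2 * fps_to_fls (fls_regpart (fls_shift 2 R))) $$ n"
    using assms unfolding low2_def by (auto simp: fls_X_power_times_conv_shift)
qed

lemma low2_iff: "low2 R \<longleftrightarrow> (\<exists>E. R = fls_X ^ 2 * fps_to_fls E)"
  using low2_rep low2_X2 by metis

lemma low2_mult_fps:
  assumes "low2 R"
  shows "low2 (fps_to_fls A * R)"
proof -
  obtain E where "R = fls_X ^ 2 * fps_to_fls E" using assms low2_iff by blast
  then have "fps_to_fls A * R = fls_X ^ 2 * fps_to_fls (A * E)"
    by (simp add: fls_times_fps_to_fls mult_ac)
  then show ?thesis using low2_X2 by simp
qed

lemma low2_add: "low2 A \<Longrightarrow> low2 B \<Longrightarrow> low2 (A + B)"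
  unfolding low2_def by simp

lemma low2_diff: "low2 A \<Longrightarrow> low2 B \<Longrightarrow> low2 (A - B)"
  unfolding low2_def by simp

lemma low2_fps:
  assumes "A $ 0 = 0" "A $ 1 = 0"
  shows "low2 (fps_to_fls A)"
  unfolding low2_def
proof (intro allI impI)
  fix n :: int assume "n < 2"
  then have "n < 0 \<or> n = 0 \<or> n = 1" by auto
  then show "fps_to_fls A $$ n = 0" using assms by auto
qed

lemma low2_compose:
  assumes R: "low2 R" and h0: "h $ 0 = 0" and hnz: "h \<noteq> 0"
  shows "low2 (fls_compose_fps R h)"
proof -
  obtain E where E: "R = fls_X ^ 2 * fps_to_fls E" using R low2_iff by blast
  have "fls_compose_fps R h = fps_to_fls (h ^ 2 * (E oo h))"
    unfolding E using h0 hnz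
    by (simp add: fls_compose_fps_mult fls_compose_fps_power fls_times_fps_to_fls fps_to_fls_power)
  moreover have "(h ^ 2 * (E oo h)) $ 0 = 0" "(h ^ 2 * (E oo h)) $ 1 = 0"
    using pow_mult_zero[OF h0, of 0 2 "E oo h"] pow_mult_zero[OF h0, of 1 2 "E oo h"] by simp_all
  ultimately show ?thesis using low2_fps by simp
qed

lemma compose_sum:
  assumes "h \<noteq> 0" "h $ 0 = 0"
  shows "fls_compose_fps (\<Sum>i\<in>A. F i) h = (\<Sum>i\<in>A. fls_compose_fps (F i) h)"
proof (induction A rule: infinite_finite_induct)
  case (insert x F)
  then show ?case using assms by (simp add: fls_compose_fps_add)
qed simp_all

lemma LamE_compose:
  assumes "h \<noteq> 0" "h $ 0 = 0"
  shows "fls_compose_fps (LamE \<beta> p U) h = LamE \<beta> p (fls_compose_fps U h)"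
  unfolding LamE_def using assms
  by (simp add: fls_compose_fps_add fls_compose_fps_diff compose_sum fls_compose_fps_mult fls_compose_fps_powi)

lemma fser_nz [simp]: "fser c \<noteq> 0"
  using fser1[of c] by (metis fps_zero_nth zero_neq_one)

lemma fL_nz [simp]: "fL c \<noteq> 0"
  by (simp add: fL_def)

lemma fLd_eq: "fls_deriv (fL c) = fps_to_fls (fps_deriv (fser c))"
  by (simp add: fL_def fls_deriv_fps_to_fls)

lemma gLd_eq: "fls_deriv (FinvL c) = fps_to_fls (fps_deriv (finv c))"
  by (simp add: FinvL_def fls_deriv_fps_to_fls)

lemma fLd_nz [simp]: "fls_deriv (fL c) \<noteq> 0"
proof -
  have "fps_deriv (fser c) $ 0 = 1" by simp
  then have "fps_deriv (fser c) \<noteq> 0" by (metis fps_zero_nth zero_neq_one)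
  then show ?thesis by (simp add: fLd_eq)
qed

lemma gLd_nz [simp]: "fls_deriv (FinvL c) \<noteq> 0"
proof -
  have "fps_deriv (finv c) $ 0 = 1" by simp
  then have "fps_deriv (finv c) \<noteq> 0" by (metis fps_zero_nth zero_neq_one)
  then show ?thesis by (simp add: gLd_eq)
qed

lemma Cg_fL: "fls_compose_fps (fL c) (finv c) = fls_X"
  using finv_nz[of c] finv0[of c] unfolding fL_def finv_def by (simp add: fps_inv_right)

lemma Cf_gL: "fls_compose_fps (FinvL c) (fser c) = fls_X"
  unfolding FinvL_def by (simp add: finv_def fps_inv)

lemma Cg_X: "fls_compose_fps fls_X (finv c) = FinvL c"
  by (simp add: FinvL_def)

lemma Cf_X: "fls_compose_fps fls_X (fser c) = fL c"
  by (simp add: fL_def)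

lemma gd_eq: "fps_deriv (finv c) = inverse (fps_deriv (fser c) oo finv c)"
  unfolding finv_def by (rule fps_inv_deriv) simp_all

lemma Cg_fLd: "fls_compose_fps (fls_deriv (fL c)) (finv c) = inverse (fls_deriv (FinvL c))"
proof -
  have s0: "subdegree (fps_deriv (fser c) oo finv c) = 0" by (simp add: subdegree_eq_0_iff)
  show ?thesis
    unfolding fLd_eq gLd_eq gd_eq using s0
    by (simp add: fls_inverse_fps_to_fls[symmetric])
qed

lemma gd_compose_f: "fps_deriv (finv c) oo fser c = inverse (fps_deriv (fser c))"
proof -
  have "fps_deriv (finv c) oo fser c = inverse ((fps_deriv (fser c) oo finv c) oo fser c)"
    unfolding gd_eq by (rule fps_inverse_compose) simp_all
  also have "(fps_deriv (fser c) oo finv c) oo fser c = fps_deriv (fser c) oo (finv c oo fser c)"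
    by (rule fps_compose_assoc[symmetric]) simp_all
  also have "finv c oo fser c = fps_X" unfolding finv_def by (rule fps_inv) simp_all
  finally show ?thesis by simp
qed

lemma Cf_gLd: "fls_compose_fps (fls_deriv (FinvL c)) (fser c) = inverse (fls_deriv (fL c))"
proof -
  have s0: "subdegree (fps_deriv (fser c)) = 0" by (simp add: subdegree_eq_0_iff)
  show ?thesis
    unfolding fLd_eq gLd_eq using s0
    by (simp add: gd_compose_f fls_inverse_fps_to_fls)
qed

definition Rg :: "(nat \<Rightarrow> real) \<Rightarrow> nat \<Rightarrow> cvec \<Rightarrow> real fls" where
  "Rg \<beta> p c = FinvL c powi (1 - int p) + LamE \<beta> p fls_X * fls_deriv (FinvL c)"

lemma g2f: "Lexpr c \<beta> p = fls_deriv (fL c) * fls_compose_fps (Rg \<beta> p c) (fser c)"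
proof -
  have "fls_compose_fps (Rg \<beta> p c) (fser c) = fls_X powi (1 - int p) + LamE \<beta> p (fL c) * inverse (fls_deriv (fL c))"
    unfolding Rg_def
    by (simp add: fls_compose_fps_add fls_compose_fps_mult fls_compose_fps_powi LamE_compose Cf_gL Cf_X Cf_gLd
        fL_def del: fls_X_power_int)
  then show ?thesis unfolding Lexpr_def
    by (simp add: field_simps del: fls_X_power_int)
qed

lemma f2g: "Rg \<beta> p c = fls_deriv (FinvL c) * fls_compose_fps (Lexpr c \<beta> p) (finv c)"
proof -
  have "fls_compose_fps (Lexpr c \<beta> p) (finv c) = FinvL c powi (1 - int p) * inverse (fls_deriv (FinvL c)) + LamE \<beta> p fls_X"
    unfolding Lexpr_def
    by (simp add: fls_compose_fps_add fls_compose_fps_mult fls_compose_fps_powi LamE_compose Cg_fL Cg_X Cg_fLd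
        FinvL_def del: fls_X_power_int)
  then show ?thesis unfolding Rg_def
    by (simp add: field_simps del: fls_X_power_int)
qed

lemma LamE_X_nth:
  "(LamE \<beta> p fls_X) $$ n = - (if n = 1 - int p then 1 else 0) + (\<Sum>j<p. if n = 1 - int j then \<beta> j else 0)"
  unfolding LamE_def by (auto simp: fls_nth_sum intro!: sum.cong)

lemma LamE_X_at:
  assumes "j0 < p"
  shows "(LamE \<beta> p fls_X) $$ (1 - int j0) = \<beta> j0"
proof -
  have "(\<Sum>j<p. if 1 - int j0 = 1 - int j then \<beta> j else 0) = (\<Sum>j<p. if j0 = j then \<beta> j else 0)"
    by (intro sum.cong) auto
  also have "\<dots> = \<beta> j0" using assms by simp
  finally show ?thesis using assms by (simp add: LamE_X_nth)
qed

lemma inv_gLd: "inverse (fls_deriv (FinvL c)) = fps_to_fls (inverse (fps_deriv (finv c)))"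
proof -
  have "subdegree (fps_deriv (finv c)) = 0" by (simp add: subdegree_eq_0_iff)
  then show ?thesis by (simp add: gLd_eq fls_inverse_fps_to_fls)
qed

lemma Rg_unique:
  assumes z1: "\<forall>j\<ge>p. \<beta>1 j = 0" and z2: "\<forall>j\<ge>p. \<beta>2 j = 0"
    and r1: "low2 (Rg \<beta>1 p c)" and r2: "low2 (Rg \<beta>2 p c)"
  shows "\<beta>1 = \<beta>2"
proof -
  define D where "D = LamE \<beta>1 p fls_X - LamE \<beta>2 p fls_X"
  have "Rg \<beta>1 p c - Rg \<beta>2 p c = D * fls_deriv (FinvL c)"
    unfolding Rg_def D_def by (simp add: algebra_simps)
  then have "low2 (D * fls_deriv (FinvL c))" using low2_diff[OF r1 r2] by simp
  then have "low2 (fps_to_fls (inverse (fps_deriv (finv c))) * (D * fls_deriv (FinvL c)))"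
    by (rule low2_mult_fps)
  moreover have "inverse (fls_deriv (FinvL c)) * (D * fls_deriv (FinvL c)) = D" by simp
  ultimately have lD: "low2 D" by (simp flip: inv_gLd)
  show ?thesis
  proof
    fix j
    show "\<beta>1 j = \<beta>2 j"
    proof (cases "j < p")
      case True
      have "D $$ (1 - int j) = 0" using lD unfolding low2_def by simp
      then show ?thesis using True by (simp add: D_def LamE_X_at)
    next
      case False
      then show ?thesis using z1 z2 by simp
    qed
  qed
qed

definition Kser :: "cvec \<Rightarrow> nat \<Rightarrow> real fps" where
  "Kser c p = - (inverse (Gser c) ^ (p - 1)) * inverse (fps_deriv (finv c))"

definition Tser :: "cvec \<Rightarrow> nat \<Rightarrow> real fls" where
  "Tser c p = fls_shift (int p - 1) (fps_to_fls (Kser c p))"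

definition beta0 :: "cvec \<Rightarrow> nat \<Rightarrow> nat \<Rightarrow> real" where
  "beta0 c p j = (if j < p then Tser c p $$ (1 - int j) else 0)"

lemma Kser0: "Kser c p $ 0 = - 1"
  by (simp add: Kser_def fps_nth_power_0)

lemma GL_powi:
  assumes "p \<ge> 1"
  shows "fps_to_fls (Gser c) powi (1 - int p) = fps_to_fls (inverse (Gser c) ^ (p - 1))"
proof -
  have s0: "subdegree (Gser c) = 0" by (simp add: subdegree_eq_0_iff)
  have "fps_to_fls (Gser c) powi (1 - int p) = inverse (fps_to_fls (Gser c)) ^ (p - 1)"
    using assms by (simp add: power_int_def nat_diff_distrib)
  then show ?thesis using s0 by (simp add: fls_inverse_fps_to_fls fps_to_fls_power)
qed

lemma Tser_eq:
  assumes "p \<ge> 1"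
  shows "Tser c p = - (FinvL c powi (1 - int p)) * inverse (fls_deriv (FinvL c))"
proof -
  have "FinvL c powi (1 - int p) = fls_shift (int p - 1) (fps_to_fls (inverse (Gser c) ^ (p - 1)))"
    unfolding FinvL_eq power_int_mult_distrib GL_powi[OF assms]
    by (simp add: fls_shifted_times_simps)
  then show ?thesis
    unfolding Tser_def Kser_def inv_gLd
    by (simp add: fls_shifted_times_simps fls_times_fps_to_fls)
qed

lemma Tser_nth: "Tser c p $$ n = (if n + int p - 1 < 0 then 0 else Kser c p $ nat (n + int p - 1))"
  by (simp add: Tser_def algebra_simps)

lemma beta0_ok:
  assumes "p \<ge> 1"
  shows "low2 (Rg (beta0 c p) p c)"
proof -
  have lD: "low2 (LamE (beta0 c p) p fls_X - Tser c p)"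
    unfolding low2_def
  proof (intro allI impI)
    fix n :: int assume n2: "n < 2"
    consider "n < 1 - int p" | "n = 1 - int p" | "1 - int p < n" by linarith
    then show "(LamE (beta0 c p) p fls_X - Tser c p) $$ n = 0"
    proof cases
      case 1
      have "(\<Sum>j<p. if n = 1 - int j then beta0 c p j else 0) = 0"
        using 1 by (intro sum.neutral) auto
      then show ?thesis using 1 by (simp add: LamE_X_nth Tser_nth)
    next
      case 2
      have "(\<Sum>j<p. if n = 1 - int j then beta0 c p j else 0) = 0"
        using 2 by (intro sum.neutral) auto
      then show ?thesis using 2 by (simp add: LamE_X_nth Tser_nth Kser0)
    next
      case 3
      define j0 where "j0 = nat (1 - n)"
      have j0: "j0 < p" "n = 1 - int j0" using 3 n2 unfolding j0_def by auto
      show ?thesis using j0 by (simp add: LamE_X_at beta0_def)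
    qed
  qed
  have "Rg (beta0 c p) p c = fls_deriv (FinvL c) * (LamE (beta0 c p) p fls_X - Tser c p)"
    unfolding Rg_def Tser_eq[OF assms] by (simp add: field_simps del: fls_X_power_int)
  then show ?thesis using low2_mult_fps[OF lD, of "fps_deriv (finv c)"] by (simp add: gLd_eq)
qed

lemma beta0_z: "\<forall>j\<ge>p. beta0 c p j = 0"
  by (simp add: beta0_def)

lemma Cg_Lexpr: "fls_compose_fps (Lexpr c \<beta> p) (finv c) = FinvL c powi (1 - int p) * inverse (fls_deriv (FinvL c)) + LamE \<beta> p fls_X"
  unfolding Lexpr_def
  by (simp add: fls_compose_fps_add fls_compose_fps_mult fls_compose_fps_powi LamE_compose Cg_fL Cg_X Cg_fLd
      FinvL_def del: fls_X_power_int)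

lemma Lexpr_imp_Rg: "low2 (Lexpr c \<beta> p) \<Longrightarrow> low2 (Rg \<beta> p c)"
  unfolding f2g[of \<beta> p c] gLd_eq by (intro low2_mult_fps low2_compose) simp_all

lemma Rg_imp_Lexpr: "low2 (Rg \<beta> p c) \<Longrightarrow> low2 (Lexpr c \<beta> p)"
  unfolding g2f[of c \<beta> p] fLd_eq by (intro low2_mult_fps low2_compose) simp_all

lemma alpha_eq:
  assumes z: "\<forall>j\<ge>p. \<beta> j = 0" and l: "low2 (Lexpr c \<beta> p)"
  shows "alpha c p = \<beta>"
  unfolding alpha_def
proof (rule the_equality)
  show "(\<forall>j\<ge>p. \<beta> j = 0) \<and> (\<forall>n<2. Lexpr c \<beta> p $$ n = 0)" using z l by (simp add: low2_def)
next
  fix \<alpha> assume "(\<forall>j\<ge>p. \<alpha> j = 0) \<and> (\<forall>n<2. Lexpr c \<alpha> p $$ n = 0)"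
  then have "\<forall>j\<ge>p. \<alpha> j = 0" "low2 (Lexpr c \<alpha> p)" by (simp_all add: low2_def)
  then show "\<alpha> = \<beta>" using Rg_unique z Lexpr_imp_Rg l by blast
qed

lemma alpha_beta0: "p \<ge> 1 \<Longrightarrow> alpha c p = beta0 c p"
  by (intro alpha_eq beta0_z Rg_imp_Lexpr beta0_ok)

lemma alpha_ok: "p \<ge> 1 \<Longrightarrow> low2 (Lexpr c (alpha c p) p)"
  by (simp add: alpha_beta0 Rg_imp_Lexpr beta0_ok)

lemma Acoef_eq: "Acoef p n c = Lexpr c (alpha c p) p $$ (int n + 1)"
  unfolding Acoef_def Lexpr_def Lam_def ..

lemma Lneg_main:
  assumes p1: "p \<ge> 1"
  shows "FinvL c * Lact (Lneg p) q c = - fls_const (of_int q) * FinvL c powi q *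
     (FinvL c powi (1 - int p) + fls_deriv (FinvL c) * Lam c p fls_X)"
proof -
  define w where "w = (\<lambda>j. Acoef p j c)"
  define g where "g = finv c"
  define Wg where "Wg = fps_to_fls (Wf w oo g)"
  have "Lact (Lneg p) q c = fls_X powi q * fps_to_fls (Cq c q * g ^ 0 * (Wf w oo g))"
  proof (rule Lact_eq)
    fix m
    show "Lneg p (\<lambda>c'. Gq c' q $ m) c = (Cq c q * g ^ 0 * (Wf w oo g)) $ m"
      using opsum[of w 0 q m c] unfolding w_def g_def Lneg_def by simp
  qed
  also have "\<dots> = - fls_const (of_int q) * (fls_X powi q * fps_to_fls (Gq c q)) * fls_deriv (FinvL c) * Wg"
    by (simp add: Cq_def Wg_def g_def gLd_eq fls_times_fps_to_fls mult_ac del: fls_X_power_int)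
  finally have L: "Lact (Lneg p) q c = - fls_const (of_int q) * FinvL c powi q * fls_deriv (FinvL c) * Wg"
    by (simp only: XGq)
  have XW: "fls_X * fps_to_fls (Wf w) = Lexpr c (alpha c p) p"
  proof (rule fls_eqI)
    fix n :: int
    have low: "\<And>n. n < 2 \<Longrightarrow> Lexpr c (alpha c p) p $$ n = 0"
      using alpha_ok[OF p1] unfolding low2_def by blast
    consider "n < 1" | "n = 1" | "n \<ge> 2" by linarith
    then show "(fls_X * fps_to_fls (Wf w)) $$ n = Lexpr c (alpha c p) p $$ n"
    proof cases
      case 1 then show ?thesis using low[of n] by (simp add: fls_X_times_conv_shift)
    next
      case 2 then show ?thesis using low[of 1] by (simp add: fls_X_times_conv_shift Wf_def)
    next
      case 3
      then have "nat (n - 1) \<noteq> 0" "int (nat (n - 1)) + 1 = n" by auto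
      then show ?thesis using 3 by (simp add: fls_X_times_conv_shift Wf_def w_def Acoef_eq)
    qed
  qed
  have "FinvL c * Wg = fls_compose_fps (fls_X * fps_to_fls (Wf w)) g"
    by (simp add: Wg_def g_def fls_compose_fps_mult FinvL_def)
  also have "\<dots> = FinvL c powi (1 - int p) * inverse (fls_deriv (FinvL c)) + Lam c p fls_X"
    unfolding XW g_def Cg_Lexpr Lam_def ..
  finally have GW: "FinvL c * Wg = FinvL c powi (1 - int p) * inverse (fls_deriv (FinvL c)) + Lam c p fls_X" .
  have "FinvL c * Lact (Lneg p) q c = - fls_const (of_int q) * FinvL c powi q * fls_deriv (FinvL c) * (FinvL c * Wg)"
    unfolding L by (simp add: mult_ac)
  also have "\<dots> = - fls_const (of_int q) * FinvL c powi q *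
     (FinvL c powi (1 - int p) + fls_deriv (FinvL c) * Lam c p fls_X)"
    unfolding GW by (simp add: field_simps del: fls_X_power_int)
  finally show ?thesis .
qed

lemma part3:
  assumes "p \<ge> 1"
  shows "Lact (Lneg p) 1 c = - (FinvL c powi (1 - int p)) - Lam c p fls_X * fls_deriv (FinvL c)"
proof -
  have "FinvL c * Lact (Lneg p) 1 c = FinvL c * (- (FinvL c powi (1 - int p)) - Lam c p fls_X * fls_deriv (FinvL c))"
    using Lneg_main[OF assms, of c 1] by (simp add: algebra_simps del: fls_X_power_int)
  then show ?thesis by simp
qed

lemma part5:
  assumes p1: "p \<ge> 1"
  shows "Lact (Lneg p) (int p) c = - of_nat p - Lam c p fls_X * fls_deriv (FinvL c ^ p)"
proof -
  define G where "G = FinvL c"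
  have Gnz: "G \<noteq> 0" by (simp add: G_def)
  have e1: "G ^ p * G powi (1 - int p) = G"
  proof -
    have "G powi (int p + (1 - int p)) = G powi (int p) * G powi (1 - int p)"
      by (rule power_int_add) (simp add: Gnz)
    then show ?thesis by simp
  qed
  have e2: "G ^ p = G * G ^ (p - 1)" using p1 by (cases p) auto
  have "G * Lact (Lneg p) (int p) c = - of_nat p * G ^ p * (G powi (1 - int p) + fls_deriv G * Lam c p fls_X)"
    using Lneg_main[OF p1, of c "int p"] unfolding G_def by (simp add: fls_of_nat del: fls_X_power_int)
  also have "\<dots> = - of_nat p * (G ^ p * G powi (1 - int p)) - of_nat p * G ^ p * fls_deriv G * Lam c p fls_X"
    by (simp add: algebra_simps del: fls_X_power_int)
  also have "\<dots> = G * (- of_nat p - Lam c p fls_X * (of_nat p * G ^ (p - 1) * fls_deriv G))"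
    unfolding e1 by (subst e2) (simp add: algebra_simps del: fls_X_power_int)
  finally have "G * Lact (Lneg p) (int p) c = G * (- of_nat p - Lam c p fls_X * fls_deriv (G ^ p))"
    by (simp add: fls_deriv_power)
  then show ?thesis using Gnz unfolding G_def by simp
qed

lemma alpha1: "alpha c 1 = (\<lambda>j. if j = 0 then - 2 * c 1 else 0)"
proof (rule alpha_eq)
  show "\<forall>j::nat\<ge>1. (if j = 0 then - 2 * c 1 else 0) = 0" by auto
  have E: "Lexpr c (\<lambda>j. if j = 0 then - 2 * c 1 else 0) 1 =
      fps_to_fls (fps_deriv (fser c)) - 1 + fls_const (- 2 * c 1) * fps_to_fls (fser c)"
    unfolding Lexpr_def LamE_def by (simp add: fL_def fls_deriv_fps_to_fls)
  show "low2 (Lexpr c (\<lambda>j. if j = 0 then - 2 * c 1 else 0) 1)"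
    unfolding E low2_def
  proof (intro allI impI)
    fix n :: int assume "n < 2"
    then have "n < 0 \<or> n = 0 \<or> n = 1" by auto
    then show "(fps_to_fls (fps_deriv (fser c)) - 1 + fls_const (- 2 * c 1) * fps_to_fls (fser c)) $$ n = 0"
      by (auto simp: fser_nth)
  qed
qed

lemma part2b: "Lact (Lneg 1) 1 c = - 1 + (1 + fls_const (2 * c 1) * fls_X) * fls_deriv (FinvL c)"
proof -
  have L: "Lam c 1 fls_X = - 1 - fls_const (2 * c 1) * fls_X"
    unfolding Lam_def alpha1 LamE_def by simp
  have P3: "Lact (Lneg 1) 1 c = - 1 - Lam c 1 fls_X * fls_deriv (FinvL c)"
    using part3[of 1 c] by simp
  show ?thesis unfolding P3 L by (simp add: algebra_simps)
qed

lemma part3u: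
  assumes "p \<ge> 1"
  shows "(\<forall>n<2. fls_nth (FinvL c powi (1 - int p) + Lam c p fls_X * fls_deriv (FinvL c)) n = 0)
             \<and> (\<forall>\<beta>. (\<forall>j\<ge>p. \<beta> j = 0)
                    \<and> (\<forall>n<2. fls_nth (FinvL c powi (1 - int p) + LamE \<beta> p fls_X * fls_deriv (FinvL c)) n = 0)
                    \<longrightarrow> LamE \<beta> p fls_X = Lam c p fls_X)"
proof -
  have A: "low2 (Rg (alpha c p) p c)" using Lexpr_imp_Rg[OF alpha_ok[OF assms]] .
  have Az: "\<forall>j\<ge>p. alpha c p j = 0" using beta0_z alpha_beta0[OF assms] by metis
  show ?thesis
  proof (rule conjI)
    show "\<forall>n<2. fls_nth (FinvL c powi (1 - int p) + Lam c p fls_X * fls_deriv (FinvL c)) n = 0"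
      using A unfolding low2_def Rg_def Lam_def by blast
  next
    show "\<forall>\<beta>. (\<forall>j\<ge>p. \<beta> j = 0)
                    \<and> (\<forall>n<2. fls_nth (FinvL c powi (1 - int p) + LamE \<beta> p fls_X * fls_deriv (FinvL c)) n = 0)
                    \<longrightarrow> LamE \<beta> p fls_X = Lam c p fls_X"
    proof (intro allI impI)
    fix \<beta> assume h: "(\<forall>j\<ge>p. \<beta> j = 0) \<and> (\<forall>n<2. fls_nth (FinvL c powi (1 - int p) + LamE \<beta> p fls_X * fls_deriv (FinvL c)) n = 0)"
    then have "low2 (Rg \<beta> p c)" unfolding low2_def Rg_def by blast
    then have "\<beta> = alpha c p" using Rg_unique h Az A by blast
    then show "LamE \<beta> p fls_X = Lam c p fls_X" by (simp add: Lam_def)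
    qed
  qed
qed

theorem theorem5p1:
  fixes c :: "nat \<Rightarrow> real"
  shows "(\<forall>k\<ge>1. Lact (Lpos k) 1 c = - (FinvL c ^ (k + 1)))
    \<and> Lact Lzero 1 c = - FinvL c + fls_X * fls_deriv (FinvL c)
    \<and> Lact (Lneg 1) 1 c = - 1 + (1 + fls_const (2 * c 1) * fls_X) * fls_deriv (FinvL c)
    \<and> (\<forall>p\<ge>2. Lact (Lneg p) 1 c
               = - (FinvL c powi (1 - int p)) - Lam c p fls_X * fls_deriv (FinvL c))
    \<and> (\<forall>p\<ge>2. (\<forall>n<2. fls_nth (FinvL c powi (1 - int p) + Lam c p fls_X * fls_deriv (FinvL c)) n = 0)
             \<and> (\<forall>\<beta>. (\<forall>j\<ge>p. \<beta> j = 0)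
                    \<and> (\<forall>n<2. fls_nth (FinvL c powi (1 - int p) + LamE \<beta> p fls_X * fls_deriv (FinvL c)) n = 0)
                    \<longrightarrow> LamE \<beta> p fls_X = Lam c p fls_X))
    \<and> (\<forall>k\<ge>1. Lact (Lpos k) (- int k) c = of_nat k)
    \<and> (\<forall>p\<ge>1. Lact (Lneg p) (int p) c
               = - of_nat p - Lam c p fls_X * fls_deriv (FinvL c ^ p))"
  using part1 part2a part2b part3 part3u part4 part5 by simp

end
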